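(* Let $\mu,\nu$ be compactly supported Borel probability measures on $\mathbb{R}^d$ with $\mu\ll\mathrm{Leb}$, and let $\varphi$ be a convex Brenier potential, i.e. $T=\nabla\varphi$ satisfies $T_\#\mu=\nu$ and $(\mathrm{Id},\nabla\varphi)_\#\mu$ is the optimal coupling for the cost $c(x,y)=\frac12\|x-y\|^2$. Assume $\varphi$ is differentiable and $\nabla\varphi$ is $L$-Lipschitz. Then for every $\pi\in\Pi(\mu,\nu)$, $$\int\|y-\nabla\varphi(x)\|^2\,\pi(dx,dy)\le 2L\Big(\int c\,d\pi-\mathrm{OT}(\mu,\nu)\Big),$$ and in particular, for the QOT optimizer $\pi_\varepsilon$ ($\varepsilon>0$), $$\int\|y-\nabla\varphi(x)\|^2\,\pi_\varepsilon(dx,dy)\le 2L\Delta_\varepsilon.$$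
   Context: $\Pi(\mu,\nu)$ is the set of couplings of $\mu,\nu$; $\mathrm{OT}(\mu,\nu)=\inf_{\pi\in\Pi(\mu,\nu)}\int c\,d\pi$. With $P=\mu\otimes\nu$, $\mathrm{QOT}_\varepsilon(\mu,\nu)=\inf_{\pi\in\Pi(\mu,\nu),\pi\ll P}\{\int c\,d\pi+\frac\varepsilon2\|\frac{d\pi}{dP}\|^2_{L^2(P)}\}$, $\pi_\varepsilon$ is its unique optimizer and $\Delta_\varepsilon=\mathrm{QOT}_\varepsilon(\mu,\nu)-\mathrm{OT}(\mu,\nu)$. *)

theory Defs
  imports "HOL-Probability.Probability"
begin

definition cost :: "'a::euclidean_space \<times> 'a \<Rightarrow> real" where
  "cost z = (1/2) * (norm (fst z - snd z))^2"

definition cs_borel_prob :: "'a::euclidean_space measure \<Rightarrow> bool" where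
  "cs_borel_prob m \<longleftrightarrow> sets m = sets borel \<and> prob_space m \<and>
     (\<exists>K. compact K \<and> emeasure m (space m - K) = 0)"

definition couplings :: "'a::euclidean_space measure \<Rightarrow> 'a measure \<Rightarrow> ('a \<times> 'a) measure set" where
  "couplings \<mu> \<nu> = {\<pi>. sets \<pi> = sets (borel \<Otimes>\<^sub>M borel) \<and> prob_space \<pi> \<and>
      distr \<pi> borel fst = \<mu> \<and> distr \<pi> borel snd = \<nu>}"

definition OT :: "'a::euclidean_space measure \<Rightarrow> 'a measure \<Rightarrow> real" where
  "OT \<mu> \<nu> = (INF \<pi> \<in> couplings \<mu> \<nu>. integral\<^sup>L \<pi> cost)"

definition dens :: "'a::euclidean_space measure \<Rightarrow> 'a measure \<Rightarrow> ('a \<times> 'a) measure \<Rightarrow> 'a \<times> 'a \<Rightarrow> real" where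
  "dens \<mu> \<nu> \<pi> z = enn2real (RN_deriv (\<mu> \<Otimes>\<^sub>M \<nu>) \<pi> z)"

text \<open>Admissible couplings for QOT: pi << P and d pi/dP in L^2(P) (others have value +infinity).\<close>
definition qot_adm :: "'a::euclidean_space measure \<Rightarrow> 'a measure \<Rightarrow> ('a \<times> 'a) measure set" where
  "qot_adm \<mu> \<nu> = {\<pi> \<in> couplings \<mu> \<nu>. absolutely_continuous (\<mu> \<Otimes>\<^sub>M \<nu>) \<pi> \<and>
      integrable (\<mu> \<Otimes>\<^sub>M \<nu>) (\<lambda>z. (dens \<mu> \<nu> \<pi> z)^2)}"

definition qot_obj :: "real \<Rightarrow> 'a::euclidean_space measure \<Rightarrow> 'a measure \<Rightarrow> ('a \<times> 'a) measure \<Rightarrow> real" where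
  "qot_obj \<epsilon> \<mu> \<nu> \<pi> = integral\<^sup>L \<pi> cost +
      (\<epsilon> / 2) * (\<integral>z. (dens \<mu> \<nu> \<pi> z)^2 \<partial>(\<mu> \<Otimes>\<^sub>M \<nu>))"

definition QOT :: "real \<Rightarrow> 'a::euclidean_space measure \<Rightarrow> 'a measure \<Rightarrow> real" where
  "QOT \<epsilon> \<mu> \<nu> = (INF \<pi> \<in> qot_adm \<mu> \<nu>. qot_obj \<epsilon> \<mu> \<nu> \<pi>)"

end

theory Submission
  imports Defs
begin

lemma line_deriv:
  fixes \<phi> :: "'a::euclidean_space \<Rightarrow> real"
  assumes grad: "\<And>x. (\<phi> has_derivative (\<lambda>h. T x \<bullet> h)) (at x)"
  shows "((\<lambda>t. \<phi> (z + t *\<^sub>R v)) has_real_derivative (T (z + t *\<^sub>R v) \<bullet> v)) (at t)"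
proof -
  have "((\<lambda>t. z + t *\<^sub>R v) has_derivative (\<lambda>h. h *\<^sub>R v)) (at t)"
    by (auto intro!: derivative_eq_intros)
  from has_derivative_compose[OF this grad]
  have "((\<lambda>t. \<phi> (z + t *\<^sub>R v)) has_derivative (\<lambda>h. T (z + t *\<^sub>R v) \<bullet> (h *\<^sub>R v))) (at t)" .
  then show ?thesis unfolding has_field_derivative_def
    by (rule has_derivative_eq_rhs) (auto simp: fun_eq_iff mult.commute)
qed

lemma tangent_ineq:
  fixes \<phi> :: "'a::euclidean_space \<Rightarrow> real"
  assumes conv: "convex_on UNIV \<phi>"
    and grad: "\<And>x. (\<phi> has_derivative (\<lambda>h. T x \<bullet> h)) (at x)"
  shows "\<phi> u \<ge> \<phi> x + T x \<bullet> (u - x)"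
proof -
  define f where "f t = \<phi> (x + t *\<^sub>R (u - x))" for t
  have cf: "convex_on UNIV f"
  proof (rule convex_onI)
    fix t a b :: real assume t: "0 < t" "t < 1"
    have "f ((1 - t) *\<^sub>R a + t *\<^sub>R b) = \<phi> ((1 - t) *\<^sub>R (x + a *\<^sub>R (u - x)) + t *\<^sub>R (x + b *\<^sub>R (u - x)))"
      unfolding f_def by (simp add: algebra_simps)
    also have "\<dots> \<le> (1 - t) * f a + t * f b"
      unfolding f_def using t by (intro convex_onD[OF conv]) auto
    finally show "f ((1 - t) *\<^sub>R a + t *\<^sub>R b) \<le> (1 - t) * f a + t * f b" .
  qed auto
  have d: "(f has_real_derivative (T x \<bullet> (u - x))) (at 0 within UNIV)"
    using line_deriv[OF grad, of x "u - x" 0] unfolding f_def by simp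
  have "f 1 - f 0 \<ge> (T x \<bullet> (u - x)) * (1 - 0)"
    by (rule convex_on_imp_above_tangent[OF cf _ _ _ d]) auto
  then show ?thesis unfolding f_def by simp
qed

lemma descent:
  fixes \<phi> :: "'a::euclidean_space \<Rightarrow> real"
  assumes grad: "\<And>x. (\<phi> has_derivative (\<lambda>h. T x \<bullet> h)) (at x)"
    and lip: "L-lipschitz_on UNIV T"
  shows "\<phi> (z + v) \<le> \<phi> z + T z \<bullet> v + L / 2 * (norm v)^2"
proof -
  define k where "k t = \<phi> (z + t *\<^sub>R v) - t * (T z \<bullet> v) - L / 2 * t^2 * (norm v)^2" for t
  have "k 1 \<le> k 0"
  proof (rule DERIV_nonpos_imp_nonincreasing[of 0 1 k])
    fix t :: real assume t: "0 \<le> t" "t \<le> 1"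
    have D: "(k has_real_derivative (T (z + t *\<^sub>R v) \<bullet> v - T z \<bullet> v - L * t * (norm v)^2)) (at t)"
      unfolding k_def
      by (rule line_deriv[OF grad] derivative_eq_intros refl | simp)+
    have "(T (z + t *\<^sub>R v) - T z) \<bullet> v \<le> norm (T (z + t *\<^sub>R v) - T z) * norm v"
      by (rule norm_cauchy_schwarz)
    also have "norm (T (z + t *\<^sub>R v) - T z) \<le> L * norm (t *\<^sub>R v)"
      using lipschitz_onD[OF lip, of "z + t *\<^sub>R v" z] by (simp add: dist_norm)
    hence "norm (T (z + t *\<^sub>R v) - T z) * norm v \<le> L * norm (t *\<^sub>R v) * norm v"
      by (intro mult_right_mono) auto
    finally have "T (z + t *\<^sub>R v) \<bullet> v - T z \<bullet> v - L * t * (norm v)^2 \<le> 0"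
      using t by (simp add: inner_diff_left power2_eq_square)
    with D show "\<exists>y. (k has_real_derivative y) (at t) \<and> y \<le> 0" by blast
  qed simp
  then show ?thesis unfolding k_def by simp
qed

lemma cocoercive:
  fixes \<phi> :: "'a::euclidean_space \<Rightarrow> real"
  assumes conv: "convex_on UNIV \<phi>"
    and grad: "\<And>x. (\<phi> has_derivative (\<lambda>h. T x \<bullet> h)) (at x)"
    and lip: "L-lipschitz_on UNIV T"
  shows "(norm (T x' - T x))^2 \<le> 2 * L * (\<phi> x - \<phi> x' - T x' \<bullet> (x - x'))"
proof (cases "L = 0")
  case True
  then have "T x' = T x" using lipschitz_onD[OF lip, of x' x] by simp
  then show ?thesis using True by simp
next
  case False
  then have L: "L > 0" using lipschitz_on_nonneg[OF lip] by simp
  define w where "w = T x - T x'"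
  define v where "v = - (1 / L) *\<^sub>R w"
  have "\<phi> (x + v) \<le> \<phi> x + T x \<bullet> v + L / 2 * (norm v)^2"
    by (rule descent[OF grad lip])
  moreover have "\<phi> (x + v) \<ge> \<phi> x' + T x' \<bullet> (x + v - x')"
    by (rule tangent_ineq[OF conv grad])
  ultimately have "\<phi> x' + T x' \<bullet> (x - x') + T x' \<bullet> v \<le> \<phi> x + T x \<bullet> v + L / 2 * (norm v)^2"
    by (simp add: inner_diff_right inner_add_right)
  hence "\<phi> x' + T x' \<bullet> (x - x') \<le> \<phi> x + w \<bullet> v + L / 2 * (norm v)^2"
    by (simp add: w_def inner_diff_left)
  moreover have "w \<bullet> v + L / 2 * (norm v)^2 = - ((norm w)^2 / (2 * L))"
    using L by (simp add: v_def power2_norm_eq_inner field_simps power2_eq_square flip: power2_norm_eq_inner)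
  ultimately have "(norm w)^2 / (2 * L) \<le> \<phi> x - \<phi> x' - T x' \<bullet> (x - x')" by linarith
  then show ?thesis using L by (simp add: w_def field_simps norm_minus_commute)
qed

lemma integrable_cpt:
  fixes f :: "'b::topological_space \<Rightarrow> real"
  assumes "finite_measure M" "sets M = sets borel" "compact C" "AE z in M. z \<in> C"
    "continuous_on UNIV f"
  shows "integrable M f"
proof -
  interpret finite_measure M by fact
  obtain B where B: "\<And>z. z \<in> C \<Longrightarrow> norm (f z) \<le> B"
    using compact_imp_bounded[OF compact_continuous_image[OF continuous_on_subset[OF assms(5)] assms(3)]]
    by (auto simp: bounded_iff)
  have m: "f \<in> borel_measurable M"
    using borel_measurable_continuous_onI[OF assms(5)] measurable_cong_sets[OF assms(2) refl] by blast
  show ?thesis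
    by (rule integrable_const_bound[of f B, OF _ m]) (use assms(4) B in auto)
qed

theorem lemma3p8:
  fixes \<mu> \<nu> :: "'a::euclidean_space measure"
    and \<phi> :: "'a \<Rightarrow> real" and T :: "'a \<Rightarrow> 'a" and L \<epsilon> :: real
    and \<pi>\<epsilon> :: "('a \<times> 'a) measure"
  assumes mu: "cs_borel_prob \<mu>" and nu: "cs_borel_prob \<nu>"
    and ac: "absolutely_continuous lborel \<mu>"
    and conv: "convex_on UNIV \<phi>"
    and grad: "\<And>x. (\<phi> has_derivative (\<lambda>h. T x \<bullet> h)) (at x)"
    and push: "distr \<mu> borel T = \<nu>"
    and opt_cpl: "distr \<mu> (borel \<Otimes>\<^sub>M borel) (\<lambda>x. (x, T x)) \<in> couplings \<mu> \<nu>"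
    and opt: "integral\<^sup>L (distr \<mu> (borel \<Otimes>\<^sub>M borel) (\<lambda>x. (x, T x))) cost = OT \<mu> \<nu>"
    and lip: "L-lipschitz_on UNIV T"
    and eps: "\<epsilon> > 0"
    and peps_adm: "\<pi>\<epsilon> \<in> qot_adm \<mu> \<nu>"
    and peps_opt: "qot_obj \<epsilon> \<mu> \<nu> \<pi>\<epsilon> = QOT \<epsilon> \<mu> \<nu>"
  shows "(\<forall>\<pi> \<in> couplings \<mu> \<nu>.
            (\<integral>z. (norm (snd z - T (fst z)))^2 \<partial>\<pi>) \<le> 2 * L * (integral\<^sup>L \<pi> cost - OT \<mu> \<nu>))
       \<and> (\<integral>z. (norm (snd z - T (fst z)))^2 \<partial>\<pi>\<epsilon>) \<le> 2 * L * (QOT \<epsilon> \<mu> \<nu> - OT \<mu> \<nu>)"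
proof -
  have smu: "sets \<mu> = sets borel" and pmu: "prob_space \<mu>"
    and "\<exists>K. compact K \<and> emeasure \<mu> (space \<mu> - K) = 0"
    using mu by (auto simp: cs_borel_prob_def)
  then obtain K where cK: "compact K" and K0: "emeasure \<mu> (space \<mu> - K) = 0" by blast
  have spmu: "space \<mu> = UNIV" using sets_eq_imp_space_eq[OF smu] by simp
  interpret P: prob_space \<mu> by fact
  have Kne: "K \<noteq> {}"
    using K0 P.emeasure_space_1 spmu by auto
  have L0: "L \<ge> 0" using lipschitz_on_nonneg[OF lip] .
  have cT: "continuous_on UNIV T" using lipschitz_on_continuous_on[OF lip] .
  have cphi: "continuous_on UNIV \<phi>"
    using grad by (intro continuous_at_imp_continuous_on) (auto intro: has_derivative_continuous)
  define K' where "K' = T ` K"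
  have cK': "compact K'" unfolding K'_def
    by (rule compact_continuous_image[OF continuous_on_subset[OF cT] cK]) auto
  have bK: "UNIV - K \<in> sets borel" "UNIV - K' \<in> sets borel"
    using cK cK' by (auto intro!: borel_open open_Diff compact_imp_closed)
  have Tm: "T \<in> measurable \<mu> borel"
    using borel_measurable_continuous_onI[OF cT] measurable_cong_sets[OF smu refl] by blast
  have snu: "sets \<nu> = sets borel" using push by auto
  have spnu: "space \<nu> = UNIV" using sets_eq_imp_space_eq[OF snu] by simp
  have K'0: "emeasure \<nu> (UNIV - K') = 0"
  proof -
    have "emeasure \<nu> (UNIV - K') = emeasure \<mu> (T -` (UNIV - K') \<inter> space \<mu>)"
      unfolding push[symmetric] 
      by (rule emeasure_distr[OF Tm]) (use bK in auto)
    also have "\<dots> \<le> emeasure \<mu> (space \<mu> - K)"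
      by (rule emeasure_mono) (use bK in \<open>auto simp: K'_def spmu smu\<close>)
    finally show ?thesis using K0 by simp
  qed
  have supp: "AE z in \<pi>. z \<in> K \<times> K'" if "\<pi> \<in> couplings \<mu> \<nu>" for \<pi>
  proof -
    have sp: "sets \<pi> = sets (borel \<Otimes>\<^sub>M borel)" and d1: "distr \<pi> borel fst = \<mu>"
      and d2: "distr \<pi> borel snd = \<nu>"
      using that by (auto simp: couplings_def)
    have mf: "fst \<in> measurable \<pi> borel"
      using measurable_fst measurable_cong_sets[OF sp refl] by blast
    have ms: "snd \<in> measurable \<pi> borel"
      using measurable_snd measurable_cong_sets[OF sp refl] by blast
    have n1: "emeasure \<pi> (fst -` (UNIV - K) \<inter> space \<pi>) = 0"
    proof -
      have "emeasure \<pi> (fst -` (UNIV - K) \<inter> space \<pi>) = emeasure (distr \<pi> borel fst) (UNIV - K)"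
        by (rule emeasure_distr[OF mf, symmetric]) (use bK in auto)
      then show ?thesis using K0 d1 spmu by simp
    qed
    have n2: "emeasure \<pi> (snd -` (UNIV - K') \<inter> space \<pi>) = 0"
    proof -
      have "emeasure \<pi> (snd -` (UNIV - K') \<inter> space \<pi>) = emeasure (distr \<pi> borel snd) (UNIV - K')"
        by (rule emeasure_distr[OF ms, symmetric]) (use bK in auto)
      then show ?thesis using K'0 d2 by simp
    qed
    have s1: "fst -` (UNIV - K) \<inter> space \<pi> \<in> sets \<pi>"
      using measurable_sets[OF mf, of "UNIV - K"] bK by auto
    have s2: "snd -` (UNIV - K') \<inter> space \<pi> \<in> sets \<pi>"
      using measurable_sets[OF ms, of "UNIV - K'"] bK by auto
    show ?thesis
      by (rule AE_I'[of "(fst -` (UNIV - K) \<inter> space \<pi>) \<union> (snd -` (UNIV - K') \<inter> space \<pi>)"])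
        (use null_sets.Un[OF null_setsI[OF n1 s1] null_setsI[OF n2 s2]] in auto)
  qed
  define \<psi> where "\<psi> y = Sup ((\<lambda>x. x \<bullet> y - \<phi> x) ` K)" for y
  have bdd: "bdd_above ((\<lambda>x. x \<bullet> y - \<phi> x) ` K)" for y
  proof -
    have "continuous_on K (\<lambda>x. x \<bullet> y - \<phi> x)"
      by (intro continuous_intros continuous_on_subset[OF cphi]) auto
    from compact_continuous_image[OF this cK] show ?thesis
      by (intro bounded_imp_bdd_above compact_imp_bounded)
  qed
  obtain R where R: "R > 0" "\<And>x. x \<in> K \<Longrightarrow> norm x \<le> R"
    using compact_imp_bounded[OF cK] by (auto simp: bounded_pos)
  have psi_le: "\<psi> y \<le> \<psi> y' + R * norm (y - y')" for y y'
    unfolding \<psi>_def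
  proof (rule cSup_least)
    show "(\<lambda>x. x \<bullet> y - \<phi> x) ` K \<noteq> {}" using Kne by auto
    fix a assume "a \<in> (\<lambda>x. x \<bullet> y - \<phi> x) ` K"
    then obtain x where x: "x \<in> K" "a = x \<bullet> y - \<phi> x" by auto
    have "x \<bullet> (y - y') \<le> norm x * norm (y - y')" by (rule norm_cauchy_schwarz)
    also have "\<dots> \<le> R * norm (y - y')" using R(2)[OF x(1)] by (intro mult_right_mono) auto
    finally have "a \<le> (x \<bullet> y' - \<phi> x) + R * norm (y - y')"
      using x by (simp add: inner_diff_right)
    also have "x \<bullet> y' - \<phi> x \<le> Sup ((\<lambda>x. x \<bullet> y' - \<phi> x) ` K)"
      by (rule cSup_upper[OF _ bdd]) (use x in auto)
    finally show "a \<le> Sup ((\<lambda>x. x \<bullet> y' - \<phi> x) ` K) + R * norm (y - y')" by simp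
  qed
  have "R-lipschitz_on UNIV \<psi>"
  proof (rule lipschitz_onI)
    fix y y' :: 'a
    show "dist (\<psi> y) (\<psi> y') \<le> R * dist y y'"
      using psi_le[of y y'] psi_le[of y' y] by (simp add: dist_norm norm_minus_commute abs_le_iff)
  qed (use R in auto)
  then have cpsi: "continuous_on UNIV \<psi>" by (rule lipschitz_on_continuous_on)
  have psiT: "\<psi> (T x') = x' \<bullet> T x' - \<phi> x'" if "x' \<in> K" for x'
    unfolding \<psi>_def
  proof (rule cSup_eq_maximum)
    show "x' \<bullet> T x' - \<phi> x' \<in> (\<lambda>x. x \<bullet> T x' - \<phi> x) ` K" using that by auto
    fix a assume "a \<in> (\<lambda>x. x \<bullet> T x' - \<phi> x) ` K"
    then obtain x where "a = x \<bullet> T x' - \<phi> x" by auto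
    moreover have "\<phi> x \<ge> \<phi> x' + T x' \<bullet> (x - x')" by (rule tangent_ineq[OF conv grad])
    ultimately show "a \<le> x' \<bullet> T x' - \<phi> x'"
      by (simp add: inner_diff_right inner_commute)
  qed
  define A where "A x = (norm x)^2 / 2 - \<phi> x" for x :: 'a
  define B where "B y = (norm y)^2 / 2 - \<psi> y" for y :: 'a
  define g where "g z = \<phi> (fst z) + \<psi> (snd z) - fst z \<bullet> snd z" for z :: "'a \<times> 'a"
  have cost_split: "cost z = A (fst z) + B (snd z) + g z" for z
    by (simp add: cost_def A_def B_def g_def power2_norm_eq_inner inner_diff_left inner_diff_right
        inner_commute field_simps)
  have cA: "continuous_on UNIV (\<lambda>z. A (fst z))"
    unfolding A_def
    by (intro continuous_intros continuous_on_compose2[OF cphi]) auto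
  have cB: "continuous_on UNIV (\<lambda>z. B (snd z))"
    unfolding B_def
    by (intro continuous_intros continuous_on_compose2[OF cpsi]) auto
  have cg: "continuous_on UNIV g"
    unfolding g_def
    by (intro continuous_intros continuous_on_compose2[OF cpsi] continuous_on_compose2[OF cphi]) auto
  have cD: "continuous_on UNIV (\<lambda>z::'a\<times>'a. (norm (snd z - T (fst z)))^2)"
    by (intro continuous_intros continuous_on_compose2[OF cT]) auto
  have sprod: "sets ((borel::'a measure) \<Otimes>\<^sub>M (borel::'a measure)) = sets (borel :: ('a \<times> 'a) measure)"
    by (simp only: borel_prod)
  have cpl_int: "integrable \<pi> f" if "\<pi> \<in> couplings \<mu> \<nu>" "continuous_on UNIV f" for \<pi> and f :: "'a \<times> 'a \<Rightarrow> real"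
  proof -
    have "prob_space \<pi>" "sets \<pi> = sets (borel \<Otimes>\<^sub>M borel)"
      using that by (auto simp: couplings_def)
    then show ?thesis
      using integrable_cpt[of \<pi> "K \<times> K'" f] supp[OF that(1)] that(2) cK cK' sprod
      by (auto intro: prob_space.axioms(1) compact_Times)
  qed
  have split: "integral\<^sup>L \<pi> cost = integral\<^sup>L \<mu> A + integral\<^sup>L \<nu> B + integral\<^sup>L \<pi> g"
    if "\<pi> \<in> couplings \<mu> \<nu>" for \<pi>
  proof -
    have sp: "sets \<pi> = sets (borel \<Otimes>\<^sub>M borel)" and d1: "distr \<pi> borel fst = \<mu>"
      and d2: "distr \<pi> borel snd = \<nu>"
      using that by (auto simp: couplings_def)
    have mf: "fst \<in> measurable \<pi> borel"
      using measurable_fst measurable_cong_sets[OF sp refl] by blast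
    have ms: "snd \<in> measurable \<pi> borel"
      using measurable_snd measurable_cong_sets[OF sp refl] by blast
    have mA: "A \<in> borel_measurable borel"
      by (intro borel_measurable_continuous_onI) (unfold A_def, intro continuous_intros cphi, auto)
    have mB: "B \<in> borel_measurable borel"
      by (intro borel_measurable_continuous_onI) (unfold B_def, intro continuous_intros cpsi, auto)
    have "integral\<^sup>L \<pi> cost = integral\<^sup>L \<pi> (\<lambda>z. A (fst z) + B (snd z) + g z)"
      by (rule Bochner_Integration.integral_cong) (auto simp: cost_split)
    also have "\<dots> = integral\<^sup>L \<pi> (\<lambda>z. A (fst z)) + integral\<^sup>L \<pi> (\<lambda>z. B (snd z)) + integral\<^sup>L \<pi> g"
      using cpl_int[OF that cA] cpl_int[OF that cB] cpl_int[OF that cg] by simp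
    also have "integral\<^sup>L \<pi> (\<lambda>z. A (fst z)) = integral\<^sup>L \<mu> A"
      using integral_distr[OF mf mA] d1 by simp
    also have "integral\<^sup>L \<pi> (\<lambda>z. B (snd z)) = integral\<^sup>L \<nu> B"
      using integral_distr[OF ms mB] d2 by simp
    finally show ?thesis .
  qed
  define \<pi>0 where "\<pi>0 = distr \<mu> (borel \<Otimes>\<^sub>M borel) (\<lambda>x. (x, T x))"
  have g0: "integral\<^sup>L \<pi>0 g = 0"
  proof -
    have m: "(\<lambda>x. (x, T x)) \<in> measurable \<mu> (borel \<Otimes>\<^sub>M borel)"
      using Tm measurable_cong_sets[OF smu refl] by (auto intro!: measurable_Pair simp: measurable_ident_sets[OF smu])
    have mg: "g \<in> borel_measurable (borel \<Otimes>\<^sub>M borel)"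
      unfolding borel_prod by (rule borel_measurable_continuous_onI[OF cg])
    have "integral\<^sup>L \<pi>0 g = integral\<^sup>L \<mu> (\<lambda>x. g (x, T x))"
      unfolding \<pi>0_def by (rule integral_distr[OF m mg])
    also have "\<dots> = 0"
    proof (rule integral_eq_zero_AE)
      have "AE x in \<mu>. x \<in> K"
        by (rule AE_I'[of "space \<mu> - K"]) (use K0 bK smu spmu in auto)
      then show "AE x in \<mu>. g (x, T x) = 0"
        by eventually_elim (simp add: g_def psiT inner_commute)
    qed
    finally show ?thesis .
  qed
  have OTeq: "OT \<mu> \<nu> = integral\<^sup>L \<mu> A + integral\<^sup>L \<nu> B"
    using split[OF opt_cpl] g0 opt unfolding \<pi>0_def by simp
  have main: "(\<integral>z. (norm (snd z - T (fst z)))^2 \<partial>\<pi>) \<le> 2 * L * (integral\<^sup>L \<pi> cost - OT \<mu> \<nu>)"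
    if "\<pi> \<in> couplings \<mu> \<nu>" for \<pi>
  proof -
    have "(\<integral>z. (norm (snd z - T (fst z)))^2 \<partial>\<pi>) \<le> (\<integral>z. 2 * L * g z \<partial>\<pi>)"
    proof (rule integral_mono_AE)
      show "integrable \<pi> (\<lambda>z. (norm (snd z - T (fst z)))^2)" by (rule cpl_int[OF that cD])
      show "integrable \<pi> (\<lambda>z. 2 * L * g z)" using cpl_int[OF that cg] by simp
      show "AE z in \<pi>. (norm (snd z - T (fst z)))^2 \<le> 2 * L * g z"
        using supp[OF that]
      proof eventually_elim
        case (elim z)
        then obtain x' where x': "x' \<in> K" "snd z = T x'" by (auto simp: K'_def)
        have "(norm (T x' - T (fst z)))^2 \<le> 2 * L * (\<phi> (fst z) - \<phi> x' - T x' \<bullet> (fst z - x'))"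
          by (rule cocoercive[OF conv grad lip])
        then show ?case
          using x' by (simp add: g_def psiT inner_diff_right inner_commute algebra_simps)
      qed
    qed
    also have "\<dots> = 2 * L * integral\<^sup>L \<pi> g" by simp
    also have "integral\<^sup>L \<pi> g = integral\<^sup>L \<pi> cost - OT \<mu> \<nu>"
      using split[OF that] OTeq by simp
    finally show ?thesis .
  qed
  have pe: "\<pi>\<epsilon> \<in> couplings \<mu> \<nu>" using peps_adm by (simp add: qot_adm_def)
  have "integral\<^sup>L \<pi>\<epsilon> cost \<le> QOT \<epsilon> \<mu> \<nu>"
  proof -
    have "0 \<le> (\<integral>z. (dens \<mu> \<nu> \<pi>\<epsilon> z)^2 \<partial>(\<mu> \<Otimes>\<^sub>M \<nu>))" by simp
    then have "0 \<le> (\<epsilon> / 2) * (\<integral>z. (dens \<mu> \<nu> \<pi>\<epsilon> z)^2 \<partial>(\<mu> \<Otimes>\<^sub>M \<nu>))" using eps by simp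
    then show ?thesis using peps_opt by (simp add: qot_obj_def)
  qed
  then have "2 * L * (integral\<^sup>L \<pi>\<epsilon> cost - OT \<mu> \<nu>) \<le> 2 * L * (QOT \<epsilon> \<mu> \<nu> - OT \<mu> \<nu>)"
    using L0 by (intro mult_left_mono) auto
  then show ?thesis using main pe by (meson order_trans)
qed
end
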